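(* Let $A > 0$ and let $a, b, a', b'$ be complex numbers such that $2|a| e^{|b|+1} \le A$, $|b - b'| < \epsilon$, $|a - a'| < \epsilon |a|$, and $\epsilon < \min(1/e, 1/A)$. Then $$\| Y(b) X(a) Y(-b) - Y(b') X(a') Y(-b') \| \le 12\, e^{A + |b|} |a|\, \epsilon.$$
   Context: For $U \in \mathfrak{sl}_2(\mathbb{C})$ and $t\in\mathbb{C}$, $U(t) = \exp(tU)$. $X = \begin{pmatrix} 1/2 & 0 \\ 0 & -1/2 \end{pmatrix}$, $\theta = \begin{pmatrix} 0 & -1/2 \\ 1/2 & 0\end{pmatrix}$, $Y = \exp(\tfrac{\pi}{2}\theta) X \exp(-\tfrac{\pi}{2}\theta)$. $\|\cdot\|$ is the operator norm on $M_2(\mathbb{C})$ with respect to the standard Hermitian norm. *)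

theory Defs
  imports "HOL-Analysis.Analysis"
begin

type_synonym cmat = "complex^2^2"

definition mk2 :: "complex \<Rightarrow> complex \<Rightarrow> complex \<Rightarrow> complex \<Rightarrow> cmat" where
  "mk2 p q r s = (\<chi> i j. if i = 1 then (if j = 1 then p else q) else (if j = 1 then r else s))"

definition smat :: "complex \<Rightarrow> cmat \<Rightarrow> cmat" where
  "smat t M = (\<chi> i j. t * M$i$j)"

primrec mpow :: "cmat \<Rightarrow> nat \<Rightarrow> cmat" where
  "mpow M 0 = mat 1"
| "mpow M (Suc n) = M ** mpow M n"

definition mexp :: "cmat \<Rightarrow> cmat" where
  "mexp M = (\<Sum>n. (1 / fact n) *\<^sub>R mpow M n)"

definition oneparam :: "cmat \<Rightarrow> complex \<Rightarrow> cmat" where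
  "oneparam U t = mexp (smat t U)"

definition opnorm :: "cmat \<Rightarrow> real" where
  "opnorm M = onorm (\<lambda>v. M *v v)"

definition Xm :: cmat where
  "Xm = mk2 (1/2) 0 0 (-1/2)"

definition thetam :: cmat where
  "thetam = mk2 0 (-1/2) (1/2) 0"

definition Ym :: cmat where
  "Ym = oneparam thetam (complex_of_real (pi/2)) ** Xm ** oneparam thetam (complex_of_real (-pi/2))"

end

theory Submission
  imports Defs
begin

lemma mk2_nth[simp]:
  "mk2 p q r s $ 1 $ 1 = p" "mk2 p q r s $ 1 $ 2 = q"
  "mk2 p q r s $ 2 $ 1 = r" "mk2 p q r s $ 2 $ 2 = s"
  by (simp_all add: mk2_def)

lemma cmat_eqI:
  fixes M N :: cmat
  assumes "M$1$1 = N$1$1" "M$1$2 = N$1$2" "M$2$1 = N$2$1" "M$2$2 = N$2$2"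
  shows "M = N"
  using assms by (simp add: vec_eq_iff forall_2)

lemma mk2_eq_iff: "mk2 p q r s = mk2 p' q' r' s' \<longleftrightarrow> p = p' \<and> q = q' \<and> r = r' \<and> s = s'"
  by (metis mk2_nth)

lemma mk2_mult: "mk2 a b c d ** mk2 e f g h = mk2 (a*e+b*g) (a*f+b*h) (c*e+d*g) (c*f+d*h)"
  by (rule cmat_eqI) (simp_all add: matrix_matrix_mult_def sum_2)

lemma mk2_one: "mat 1 = mk2 1 0 0 1"
  by (rule cmat_eqI) (simp_all add: mat_def)

lemma mk2_diff: "mk2 a b c d - mk2 e f g h = mk2 (a-e) (b-f) (c-g) (d-h)"
  by (rule cmat_eqI) simp_all

lemma mk2_scaleR: "t *\<^sub>R mk2 a b c d = mk2 (t *\<^sub>R a) (t *\<^sub>R b) (t *\<^sub>R c) (t *\<^sub>R d)"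
  by (rule cmat_eqI) simp_all

lemma smat_mk2: "smat t (mk2 a b c d) = mk2 (t*a) (t*b) (t*c) (t*d)"
  by (rule cmat_eqI) (simp_all add: smat_def)

lemma sums_cmat:
  fixes f :: "nat \<Rightarrow> cmat"
  assumes "\<And>i j. (\<lambda>n. f n $ i $ j) sums (L $ i $ j)"
  shows "f sums L"
  using assms unfolding sums_def
  by (intro vec_tendstoI) (simp add: sum_component)

lemma opnorm_mk2: "opnorm (mk2 p q r s) \<le> norm p + norm q + norm r + norm s"
  unfolding opnorm_def
proof (rule onorm_le)
  fix v :: "complex^2"
  have "norm (mk2 p q r s *v v) \<le> norm ((mk2 p q r s *v v)$1) + norm ((mk2 p q r s *v v)$2)"
    unfolding norm_vec_def by (rule order_trans[OF L2_set_le_sum]) (simp_all add: sum_2)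
  also have "\<dots> \<le> (norm p * norm v + norm q * norm v) + (norm r * norm v + norm s * norm v)"
  proof -
    have a: "norm (v$1) \<le> norm v" "norm (v$2) \<le> norm v" by (rule Finite_Cartesian_Product.norm_nth_le)+
    have "norm (p * v$1 + q * v$2) \<le> norm p * norm v + norm q * norm v"
      by (rule order_trans[OF norm_triangle_ineq]) (simp add: norm_mult a add_mono mult_left_mono)
    moreover have "norm (r * v$1 + s * v$2) \<le> norm r * norm v + norm s * norm v"
      by (rule order_trans[OF norm_triangle_ineq]) (simp add: norm_mult a add_mono mult_left_mono)
    ultimately show ?thesis by (simp add: matrix_vector_mult_def sum_2 add_mono)
  qed
  finally show "norm (mk2 p q r s *v v) \<le> (norm p + norm q + norm r + norm s) * norm v"
    by (simp add: algebra_simps)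
qed


lemma mpow_diag: "mpow (mk2 x 0 0 y) n = mk2 (x^n) 0 0 (y^n)"
  by (induction n) (simp_all add: mk2_one mk2_mult)

lemma mpow_conj:
  assumes "Q ** P = mat 1" "P ** Q = mat 1"
  shows "mpow (P ** D ** Q) n = P ** mpow D n ** Q"
proof (induction n)
  case 0 then show ?case using assms by (simp add: matrix_mul_rid)
next
  case (Suc n)
  have "mpow (P ** D ** Q) (Suc n) = (P ** D ** Q) ** (P ** mpow D n ** Q)" using Suc by simp
  also have "\<dots> = P ** D ** (Q ** P) ** mpow D n ** Q" by (simp add: matrix_mul_assoc)
  also have "\<dots> = P ** mpow D (Suc n) ** Q" using assms by (simp add: matrix_mul_rid matrix_mul_assoc)
  finally show ?case .
qed

lemma exp_series2:
  fixes a b x y :: complex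
  shows "(\<lambda>n. (1 / fact n) *\<^sub>R (a * x^n + b * y^n)) sums (a * exp x + b * exp y)"
proof -
  have "(\<lambda>n. a * (x^n /\<^sub>R fact n) + b * (y^n /\<^sub>R fact n)) sums (a * exp x + b * exp y)"
    by (intro sums_add sums_mult exp_converges)
  then show ?thesis by (simp add: scaleR_add_right divide_inverse_commute)
qed

lemma conj_entry:
  fixes P Q :: cmat
  shows "(P ** mk2 x 0 0 y ** Q) $ i $ j = (P$i$1 * Q$1$j) * x + (P$i$2 * Q$2$j) * y"
  by (simp add: matrix_matrix_mult_def sum_2 algebra_simps)

lemma mexp_conj:
  fixes P Q :: cmat
  assumes "Q ** P = mat 1" "P ** Q = mat 1"
  shows "mexp (P ** mk2 x 0 0 y ** Q) = P ** mk2 (exp x) 0 0 (exp y) ** Q"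
  unfolding mexp_def mpow_conj[OF assms] mpow_diag
proof (rule sums_unique[symmetric], rule sums_cmat)
  fix i j
  show "(\<lambda>n. ((1 / fact n) *\<^sub>R (P ** mk2 (x ^ n) 0 0 (y ^ n) ** Q)) $ i $ j) sums
          ((P ** mk2 (exp x) 0 0 (exp y) ** Q) $ i $ j)"
    unfolding conj_entry vector_scaleR_component by (rule exp_series2)
qed

lemma cis_exp: "exp (\<i> * complex_of_real (pi/4)) ^ 2 = \<i>"
proof -
  have "exp (\<i> * complex_of_real (pi/4)) ^ 2 = exp (\<i> * complex_of_real (pi/2))"
    by (simp add: exp_add[symmetric] power2_eq_square field_simps)
  also have "\<dots> = cis (pi/2)" by (rule cis_conv_exp[symmetric])
  also have "\<dots> = \<i>" by simp
  finally show ?thesis .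
qed

definition Pt :: cmat where "Pt = mk2 1 1 (-\<i>) \<i>"
definition Qt :: cmat where "Qt = mk2 (1/2) (\<i>/2) (1/2) (-\<i>/2)"

lemma Pt_Qt: "Qt ** Pt = mat 1" "Pt ** Qt = mat 1"
  by (simp_all add: Pt_def Qt_def mk2_mult mk2_one mk2_eq_iff field_simps)

lemma theta_oneparam: "oneparam thetam t = Pt ** mk2 (exp (t * (\<i>/2))) 0 0 (exp (- (t * (\<i>/2)))) ** Qt"
proof -
  have "smat t thetam = Pt ** mk2 (t * (\<i>/2)) 0 0 (- (t * (\<i>/2))) ** Qt"
    by (simp add: thetam_def Pt_def Qt_def smat_mk2 mk2_mult mk2_eq_iff field_simps)
  then show ?thesis unfolding oneparam_def using mexp_conj[OF Pt_Qt] by simp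
qed

lemma Ym_eq: "Ym = mk2 0 (1/2) (1/2) 0"
proof -
  define u where "u = exp (\<i> * complex_of_real (pi/4))"
  have u2: "u * u = \<i>" using cis_exp by (simp add: u_def power2_eq_square)
  have u0: "u \<noteq> 0" by (simp add: u_def)
  have e1: "exp (complex_of_real (pi/2) * (\<i>/2)) = u" unfolding u_def by (simp add: field_simps)
  have e2: "exp (- (complex_of_real (pi/2) * (\<i>/2))) = inverse u" unfolding u_def by (simp add: field_simps exp_minus)
  have e3: "exp (complex_of_real (-pi/2) * (\<i>/2)) = inverse u" unfolding u_def by (simp add: field_simps exp_minus)
  have e4: "exp (- (complex_of_real (-pi/2) * (\<i>/2))) = u" unfolding u_def by (simp add: field_simps)
  show ?thesis
    unfolding Ym_def theta_oneparam e1 e2 e3 e4 Xm_def Pt_def Qt_def mk2_mult mk2_eq_iff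
    using u0 u2 by (simp add: field_simps)
qed


definition PY :: cmat where "PY = mk2 1 1 1 (-1)"
definition QY :: cmat where "QY = mk2 (1/2) (1/2) (1/2) (-1/2)"

lemma PY_QY: "QY ** PY = mat 1" "PY ** QY = mat 1"
  by (simp_all add: PY_def QY_def mk2_mult mk2_one mk2_eq_iff field_simps)

lemma Y_oneparam: "oneparam Ym b = PY ** mk2 (exp (b/2)) 0 0 (exp (-(b/2))) ** QY"
proof -
  have "smat b Ym = PY ** mk2 (b/2) 0 0 (-(b/2)) ** QY"
    by (simp add: Ym_eq PY_def QY_def smat_mk2 mk2_mult mk2_eq_iff field_simps)
  then show ?thesis unfolding oneparam_def using mexp_conj[OF PY_QY] by simp
qed

lemma X_oneparam: "oneparam Xm a = mk2 (exp (a/2)) 0 0 (exp (-(a/2)))"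
proof -
  have I: "mat 1 ** mat 1 = (mat 1 :: cmat)" by (simp add: matrix_mul_lid)
  have "smat a Xm = mat 1 ** mk2 (a/2) 0 0 (-(a/2)) ** mat 1"
    by (simp add: Xm_def smat_mk2 matrix_mul_lid matrix_mul_rid mk2_eq_iff)
  then show ?thesis unfolding oneparam_def using mexp_conj[OF I I]
    by (simp add: matrix_mul_lid matrix_mul_rid)
qed

definition Cf :: "complex \<Rightarrow> complex" where "Cf a = (exp (a/2) + exp (-(a/2)))/2"
definition Sf :: "complex \<Rightarrow> complex" where "Sf a = (exp (a/2) - exp (-(a/2)))/2"

definition Mf :: "complex \<Rightarrow> complex \<Rightarrow> cmat" where
  "Mf a b = mk2 (Cf a + (exp b + exp (-b))/2 * Sf a) (- ((exp b - exp (-b))/2 * Sf a))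
                ((exp b - exp (-b))/2 * Sf a) (Cf a - (exp b + exp (-b))/2 * Sf a)"

lemma M_eq: "oneparam Ym b ** oneparam Xm a ** oneparam Ym (- b) = Mf a b"
proof -
  define x where "x = exp (b/2)"
  define y where "y = exp (a/2)"
  have x0: "x \<noteq> 0" and y0: "y \<noteq> 0" by (simp_all add: x_def y_def)
  have e1: "exp (-(b/2)) = inverse x" "exp (-(a/2)) = inverse y" "exp ((-b)/2) = inverse x"
     "exp (-((-b)/2)) = x"
    by (simp_all add: x_def y_def exp_minus)
  have e2: "exp b = x * x" "exp (-b) = inverse (x * x)"
    unfolding x_def by (simp_all add: exp_add[symmetric] exp_minus)
  show ?thesis
    unfolding Y_oneparam X_oneparam Mf_def Cf_def Sf_def e1 e2 x_def[symmetric] y_def[symmetric]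
      PY_def QY_def mk2_mult mk2_eq_iff
    using x0 y0 by (simp add: field_simps)
qed


lemma exp_sub_one_bound:
  fixes u :: complex
  shows "norm (exp u - 1) \<le> norm u * exp (norm u)"
proof -
  have "norm (exp u - exp 0) \<le> exp (norm u) * norm (u - 0)"
  proof (rule field_differentiable_bound[of "cball 0 (norm u)" exp exp])
    fix z :: complex assume "z \<in> cball 0 (norm u)"
    then have "norm z \<le> norm u" by simp
    then show "norm (exp z) \<le> exp (norm u)"
      using norm_exp[of z] by (meson exp_le_cancel_iff order_trans)
  qed (auto intro: has_field_derivative_at_within DERIV_exp)
  then show ?thesis by (simp add: mult.commute)
qed

lemma exp_diff_bound:
  fixes z w :: complex
  shows "norm (exp z - exp w) \<le> norm (z - w) * exp (norm (z - w)) * exp (norm w)"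
proof -
  have "exp z - exp w = exp w * (exp (z - w) - 1)"
    by (simp add: algebra_simps exp_diff)
  then have "norm (exp z - exp w) = norm (exp w) * norm (exp (z - w) - 1)"
    by (simp add: norm_mult)
  also have "\<dots> \<le> exp (norm w) * (norm (z - w) * exp (norm (z - w)))"
    by (intro mult_mono norm_exp exp_sub_one_bound) auto
  finally show ?thesis by (simp add: mult_ac)
qed

lemma L1:
  fixes a a' :: complex
  assumes "cmod (a - a') \<le> e * cmod a" "e \<le> 1"
  shows "cmod (exp (a'/2) - exp (a/2)) \<le> e * cmod a / 2 * exp (cmod a)"
proof -
  have n: "norm (a'/2 - a/2) = cmod (a - a') / 2"
    by (simp add: norm_minus_commute flip: diff_divide_distrib)
  have "e * cmod a \<le> cmod a" using mult_right_mono[OF assms(2) norm_ge_zero[of a]] by simp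
  then have "norm (a'/2 - a/2) + norm (a/2) \<le> cmod a" using n assms by (simp add: norm_divide)
  then have "exp (norm (a'/2 - a/2)) * exp (norm (a/2)) \<le> exp (cmod a)"
    by (simp flip: exp_add)
  moreover have "norm (a'/2 - a/2) \<le> e * cmod a / 2" using n assms by simp
  ultimately have "norm (a'/2 - a/2) * (exp (norm (a'/2 - a/2)) * exp (norm (a/2))) \<le> e * cmod a / 2 * exp (cmod a)"
    using order_trans[OF norm_ge_zero assms(1)] by (intro mult_mono) auto
  then show ?thesis using exp_diff_bound[of "a'/2" "a/2"] by (simp add: mult_ac)
qed

lemma L2:
  fixes a' :: complex
  shows "cmod (Sf a') \<le> cmod a' / 2 * exp (cmod a' / 2)"
proof -
  have "cmod (Sf a') = cmod ((exp (a'/2) - 1) - (exp (-(a'/2)) - 1)) / 2" by (simp add: Sf_def norm_divide)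
  then have "cmod (Sf a') \<le> (cmod (exp (a'/2) - 1) + cmod (exp (-(a'/2)) - 1)) / 2"
    using norm_triangle_ineq4[of "exp (a'/2) - 1" "exp (-(a'/2)) - 1"] by (simp add: divide_right_mono)
  also have "\<dots> \<le> (cmod (a'/2) * exp (cmod (a'/2)) + cmod (-(a'/2)) * exp (cmod (-(a'/2)))) / 2"
    by (intro divide_right_mono add_mono exp_sub_one_bound) auto
  finally show ?thesis by (simp add: norm_divide)
qed

lemma Tbound:
  fixes w w' S S' :: complex
  assumes "norm w \<le> B" "norm (w - w') \<le> 2 * e * B" "norm (S - S') \<le> K / 2" "norm S' \<le> K'"
    and "e * K' \<le> K" "e \<ge> 0"
  shows "norm (w * S - w' * S') \<le> 5/2 * B * K"
proof -
  have B0: "B \<ge> 0" using assms(1) norm_ge_zero order_trans by blast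
  have "w * S - w' * S' = w * (S - S') + (w - w') * S'" by (simp add: algebra_simps)
  then have "norm (w * S - w' * S') \<le> norm w * norm (S - S') + norm (w - w') * norm S'"
    by (metis norm_mult norm_triangle_ineq)
  also have "\<dots> \<le> B * (K/2) + (2 * e * B) * K'"
    using assms B0 by (intro add_mono mult_mono) auto
  also have "\<dots> \<le> B * (K/2) + 2 * B * K"
    using mult_left_mono[OF assms(5), of "2*B"] B0 by (simp add: mult_ac)
  finally show ?thesis by (simp add: algebra_simps)
qed


lemma sum4:
  fixes d x y :: complex
  shows "cmod (d + (x+y)/2) + cmod (-((x-y)/2)) + cmod ((x-y)/2) + cmod (d - (x+y)/2)
         \<le> 2*cmod d + 2*cmod x + 2*cmod y"
proof -
  have p: "cmod (x+y) \<le> cmod x + cmod y" "cmod (x-y) \<le> cmod x + cmod y"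
    by (rule norm_triangle_ineq, rule norm_triangle_ineq4)
  have "cmod (d + (x+y)/2) \<le> cmod d + cmod (x+y)/2"
    using norm_triangle_ineq[of d "(x+y)/2"] by (simp add: norm_divide)
  moreover have "cmod (d - (x+y)/2) \<le> cmod d + cmod (x+y)/2"
    using norm_triangle_ineq4[of d "(x+y)/2"] by (simp add: norm_divide)
  moreover have "cmod (-((x-y)/2)) = cmod (x-y)/2" "cmod ((x-y)/2) = cmod (x-y)/2"
    by (simp_all add: norm_divide)
  ultimately show ?thesis using p by linarith
qed

theorem lemmaA7:
  fixes A \<epsilon> :: real and a b a' b' :: complex
  assumes "A > 0"
    and "2 * cmod a * exp (cmod b + 1) \<le> A"
    and "cmod (b - b') < \<epsilon>"
    and "cmod (a - a') < \<epsilon> * cmod a"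
    and "\<epsilon> < min (1 / exp 1) (1 / A)"
  shows "opnorm (oneparam Ym b ** oneparam Xm a ** oneparam Ym (- b)
                 - oneparam Ym b' ** oneparam Xm a' ** oneparam Ym (- b'))
           \<le> 12 * exp (A + cmod b) * cmod a * \<epsilon>"
proof -
  have e0: "\<epsilon> > 0" using assms(3) norm_ge_zero le_less_trans by blast
  have "2 \<le> exp (1::real)" using exp_ge_add_one_self[of 1] by simp
  then have "1 / exp 1 \<le> (1/2::real)" by (simp add: field_simps)
  then have eh: "\<epsilon> \<le> 1/2" using assms(5) by linarith
  have "1 \<le> exp (cmod b + 1)" by simp
  then have "cmod a \<le> cmod a * exp (cmod b + 1)" by (simp add: mult_le_cancel_left1)
  moreover have "0 \<le> cmod a * exp (cmod b + 1)" by simp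
  ultimately have aA: "cmod a \<le> A" using assms(2) by linarith
  have da: "cmod (a - a') \<le> \<epsilon> * cmod a" using assms(4) by simp
  define K where "K = \<epsilon> * cmod a * exp (cmod a)"
  define B where "B = exp (cmod b)"
  have B1: "1 \<le> B" unfolding B_def by simp
  have K0: "0 \<le> K" unfolding K_def using e0 by simp
  have h1: "cmod (exp (a'/2) - exp (a/2)) \<le> K/2"
    using L1[OF da] eh unfolding K_def by simp
  have h2: "cmod (exp (-(a'/2)) - exp (-(a/2))) \<le> K/2"
    using L1[of "-a" "-a'" \<epsilon>] da eh unfolding K_def by (simp add: norm_minus_commute)
  have dC: "cmod (Cf a - Cf a') \<le> K/2"
  proof -
    have "Cf a - Cf a' = -((exp (a'/2) - exp (a/2)) + (exp (-(a'/2)) - exp (-(a/2))))/2"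
      by (simp add: Cf_def field_simps)
    then have "cmod (Cf a - Cf a') = cmod ((exp (a'/2) - exp (a/2)) + (exp (-(a'/2)) - exp (-(a/2))))/2"
      by (simp only: norm_minus_cancel norm_divide) simp
    then have "cmod (Cf a - Cf a') \<le> (cmod (exp (a'/2) - exp (a/2)) + cmod (exp (-(a'/2)) - exp (-(a/2))))/2"
      using divide_right_mono[OF norm_triangle_ineq[of "exp (a'/2) - exp (a/2)" "exp (-(a'/2)) - exp (-(a/2))"], of 2]
      by simp
    moreover have "cmod (exp (a'/2) - exp (a/2)) + cmod (exp (-(a'/2)) - exp (-(a/2))) \<le> K"
      using h1 h2 by linarith
    ultimately show ?thesis using divide_right_mono[of _ K "2::real"] by (meson order_trans zero_le_numeral)
  qed
  have dS: "cmod (Sf a - Sf a') \<le> K/2"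
  proof -
    have "Sf a - Sf a' = -((exp (a'/2) - exp (a/2)) - (exp (-(a'/2)) - exp (-(a/2))))/2"
      by (simp add: Sf_def field_simps)
    then have "cmod (Sf a - Sf a') = cmod ((exp (a'/2) - exp (a/2)) - (exp (-(a'/2)) - exp (-(a/2))))/2"
      by (simp only: norm_minus_cancel norm_divide) simp
    then have "cmod (Sf a - Sf a') \<le> (cmod (exp (a'/2) - exp (a/2)) + cmod (exp (-(a'/2)) - exp (-(a/2))))/2"
      using divide_right_mono[OF norm_triangle_ineq4[of "exp (a'/2) - exp (a/2)" "exp (-(a'/2)) - exp (-(a/2))"], of 2]
      by simp
    moreover have "cmod (exp (a'/2) - exp (a/2)) + cmod (exp (-(a'/2)) - exp (-(a/2))) \<le> K"
      using h1 h2 by linarith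
    ultimately show ?thesis using divide_right_mono[of _ K "2::real"] by (meson order_trans zero_le_numeral)
  qed
  have a'a: "cmod a' / 2 \<le> cmod a"
  proof -
    have "cmod a' \<le> cmod a + cmod (a - a')" using norm_triangle_ineq2[of a' a] by (simp add: norm_minus_commute)
    moreover have "\<epsilon> * cmod a \<le> cmod a" using mult_right_mono[of \<epsilon> 1 "cmod a"] eh by simp
    ultimately show ?thesis using da by linarith
  qed
  have S': "cmod (Sf a') \<le> cmod a * exp (cmod a)"
  proof -
    have "cmod a' / 2 * exp (cmod a' / 2) \<le> cmod a * exp (cmod a)"
      using a'a by (intro mult_mono) auto
    then show ?thesis using L2[of a'] by linarith
  qed
  have eK: "\<epsilon> * (cmod a * exp (cmod a)) \<le> K" unfolding K_def by (simp add: mult_ac)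
  have bb: "cmod (b' - b) * exp (cmod (b' - b)) \<le> 2 * \<epsilon>"
  proof -
    have "cmod (b' - b) \<le> \<epsilon>" using assms(3) by (simp add: norm_minus_commute)
    moreover have "exp (cmod (b' - b)) \<le> 2"
      using exp_half_le2 \<open>cmod (b' - b) \<le> \<epsilon>\<close> eh by (meson exp_le_cancel_iff order_trans)
    ultimately show ?thesis using e0 by (simp add: mult_mono mult.commute)
  qed
  have w1: "cmod (exp b - exp b') \<le> 2 * \<epsilon> * B"
  proof -
    have "cmod (exp b - exp b') \<le> cmod (b' - b) * exp (cmod (b' - b)) * exp (cmod b)"
      using exp_diff_bound[of b' b] by (simp add: norm_minus_commute)
    also have "\<dots> \<le> 2 * \<epsilon> * B" unfolding B_def using bb by (simp add: mult_right_mono)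
    finally show ?thesis .
  qed
  have w2: "cmod (exp (-b) - exp (-b')) \<le> 2 * \<epsilon> * B"
  proof -
    have "cmod (exp (-b) - exp (-b')) \<le> cmod ((-b') - (-b)) * exp (cmod ((-b') - (-b))) * exp (cmod (-b))"
      using exp_diff_bound[of "-b'" "-b"] by (simp add: norm_minus_commute)
    also have "\<dots> = cmod (b' - b) * exp (cmod (b' - b)) * exp (cmod b)"
      by (simp add: norm_minus_commute)
    also have "\<dots> \<le> 2 * \<epsilon> * B" unfolding B_def using bb by (simp add: mult_right_mono)
    finally show ?thesis .
  qed
  have T1: "cmod (exp b * Sf a - exp b' * Sf a') \<le> 5/2 * B * K"
    by (rule Tbound[OF _ w1 dS S' eK]) (use e0 norm_exp[of b] in \<open>auto simp: B_def\<close>)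
  have T2: "cmod (exp (-b) * Sf a - exp (-b') * Sf a') \<le> 5/2 * B * K"
    by (rule Tbound[OF _ w2 dS S' eK]) (use e0 norm_exp[of "-b"] in \<open>auto simp: B_def\<close>)
  define d where "d = Cf a - Cf a'"
  define x where "x = exp b * Sf a - exp b' * Sf a'"
  define y where "y = exp (-b) * Sf a - exp (-b') * Sf a'"
  have Meq: "Mf a b - Mf a' b' = mk2 (d + (x+y)/2) (-((x-y)/2)) ((x-y)/2) (d - (x+y)/2)"
    unfolding Mf_def mk2_diff mk2_eq_iff d_def x_def y_def by (simp add: field_simps)
  have "opnorm (Mf a b - Mf a' b') \<le> 2 * cmod d + 2 * cmod x + 2 * cmod y"
    unfolding Meq by (rule order_trans[OF opnorm_mk2 sum4])
  also have "\<dots> \<le> K + 10 * B * K"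
    using dC T1 T2 unfolding d_def x_def y_def by linarith
  also have "\<dots> \<le> 11 * B * K" using mult_right_mono[OF B1 K0] by (simp add: algebra_simps)
  also have "\<dots> \<le> 12 * exp (A + cmod b) * cmod a * \<epsilon>"
  proof -
    have "B * K = exp (cmod a + cmod b) * cmod a * \<epsilon>"
      unfolding B_def K_def by (simp add: exp_add mult_ac)
    also have "\<dots> \<le> exp (A + cmod b) * cmod a * \<epsilon>"
      using aA e0 by (intro mult_right_mono) auto
    finally have "B * K \<le> exp (A + cmod b) * cmod a * \<epsilon>" .
    moreover have "0 \<le> B * K" using B1 K0 by simp
    ultimately have "11 * (B * K) \<le> 12 * (exp (A + cmod b) * cmod a * \<epsilon>)" by linarith
    then show ?thesis by (simp add: mult_ac)
  qed
  finally show ?thesis unfolding M_eq .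
qed

end
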